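(* Let $M\in\mathcal S^{n\times n}$ be distinguished with block form $M=\begin{bmatrix}A&C\\C^t&B\end{bmatrix}$, where $A$ has degree $k>0$ and $B$ degree $l=n-k$. Assume (i) $A$ is self-conjugate; (ii) the first row of $M$ is $[1,2,\dots,2]$; (iii) $J_M(\{1,i,j\})\ne\emptyset$ for all $1\le i\le k<j\le n$. Then every entry of $C$ equals $2$.
   Context: $\mathcal S=\{0,1,2,3\}$ is the Klein four-group ($\mathbb Z_2$-vector space) with $x+x=0$, $1+2=3$, $1+3=2$, $2+3=1$; conjugation is the involution $\bar0=0,\bar1=1,\bar2=3,\bar3=2$. A square matrix is distinguished if it has $1$ on the diagonal and $2$ or $3$ off the diagonal, and self-conjugate if $A^t=\overline A$. $J_M(U)=\{j:\sum_{i\in U}M_{ij}=1\}$. *)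

theory Defs
  imports Main
begin

text \<open>The Klein four-group S = {0,1,2,3} with 1+2=3, 1+3=2, 2+3=1, x+x=0.\<close>
datatype S = S0 | S1 | S2 | S3

fun sadd :: "S \<Rightarrow> S \<Rightarrow> S" where
  "sadd S0 y = y"
| "sadd x S0 = x"
| "sadd S1 S1 = S0" | "sadd S2 S2 = S0" | "sadd S3 S3 = S0"
| "sadd S1 S2 = S3" | "sadd S2 S1 = S3"
| "sadd S1 S3 = S2" | "sadd S3 S1 = S2"
| "sadd S2 S3 = S1" | "sadd S3 S2 = S1"

instantiation S :: comm_monoid_add
begin
definition zero_S_def: "0 = S0"
definition plus_S_def: "x + y = sadd x y"
instance
proof
  fix a b c :: S
  show "a + b + c = a + (b + c)" unfolding plus_S_def
    by (cases a; cases b; cases c; simp)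
  show "a + b = b + a" unfolding plus_S_def
    by (cases a; cases b; simp)
  show "0 + a = a" unfolding plus_S_def zero_S_def by simp
qed
end

fun sconj :: "S \<Rightarrow> S" where
  "sconj S0 = S0" | "sconj S1 = S1" | "sconj S2 = S3" | "sconj S3 = S2"

text \<open>Matrices over S of size n are functions nat \<Rightarrow> nat \<Rightarrow> S, indices 1..n.\<close>
definition distinguished :: "nat \<Rightarrow> (nat \<Rightarrow> nat \<Rightarrow> S) \<Rightarrow> bool" where
  "distinguished n M \<longleftrightarrow>
     (\<forall>i\<in>{1..n}. M i i = S1) \<and>
     (\<forall>i\<in>{1..n}. \<forall>j\<in>{1..n}. i \<noteq> j \<longrightarrow> M i j = S2 \<or> M i j = S3)"

definition self_conjugate :: "nat \<Rightarrow> (nat \<Rightarrow> nat \<Rightarrow> S) \<Rightarrow> bool" where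
  "self_conjugate m A \<longleftrightarrow> (\<forall>i\<in>{1..m}. \<forall>j\<in>{1..m}. A j i = sconj (A i j))"

definition JM :: "nat \<Rightarrow> (nat \<Rightarrow> nat \<Rightarrow> S) \<Rightarrow> nat set \<Rightarrow> nat set" where
  "JM n M U = {j\<in>{1..n}. (\<Sum>i\<in>U. M i j) = S1}"

end

theory Submission
  imports Defs
begin

lemma sum3: "a \<noteq> b \<Longrightarrow> a \<noteq> c \<Longrightarrow> b \<noteq> c \<Longrightarrow> (\<Sum>x\<in>{a,b,c}. f x) = f a + (f b + (f c :: S))"
  by simp

theorem mainTheorem12:
  fixes n k :: nat and M :: "nat \<Rightarrow> nat \<Rightarrow> S"
  assumes dist: "distinguished n M"
    and kpos: "0 < k" and kn: "k \<le> n"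
    and block: "\<forall>i\<in>{1..k}. \<forall>j\<in>{k+1..n}. M j i = M i j"
    and selfconjA: "self_conjugate k M"
    and row1: "M 1 1 = S1" "\<forall>j\<in>{2..n}. M 1 j = S2"
    and J: "\<forall>i\<in>{1..k}. \<forall>j\<in>{k+1..n}. JM n M {1, i, j} \<noteq> {}"
  shows "\<forall>i\<in>{1..k}. \<forall>j\<in>{k+1..n}. M i j = S2"
proof (intro ballI)
  fix i j assume i: "i \<in> {1..k}" and j: "j \<in> {k+1..n}"
  show "M i j = S2"
  proof (cases "i = 1")
    case True thus ?thesis using row1 j kpos by auto
  next
    case False
    have D: "\<And>a b. a \<in> {1..n} \<Longrightarrow> b \<in> {1..n} \<Longrightarrow> a \<noteq> b \<Longrightarrow> M a b = S2 \<or> M a b = S3"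
      and Dd: "\<And>a. a \<in> {1..n} \<Longrightarrow> M a a = S1"
      using dist unfolding distinguished_def by auto
    have ij: "i \<noteq> j" "1 \<noteq> j" "1 \<noteq> i" using i j False by auto
    have in1: "i \<in> {1..n}" "j \<in> {1..n}" "1 \<in> {1..n}" using i j kn by auto
    have "JM n M {1,i,j} \<noteq> {}" using J i j by blast
    then obtain c where c0: "c \<in> {1..n}" "(\<Sum>x\<in>{1,i,j}. M x c) = S1"
      unfolding JM_def by blast
    have c: "c \<in> {1..n}" "M 1 c + (M i c + M j c) = S1"
      using c0 sum3[OF ij(3) ij(2) ij(1), of "\<lambda>x. M x c"] by auto
    have Mi1: "M i 1 = S3" using selfconjA i kpos row1(2) in1 ij
      unfolding self_conjugate_def by (metis atLeastAtMost_iff le_numeral_extra(4) linorder_not_le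
          less_one nat_less_le one_le_numeral sconj.simps(3) Suc_1 Suc_leI)
    have Mj1: "M j 1 = M 1 j" using block j kpos proof -
      have "(1::nat) \<in> {1..k}" using kpos by auto
      thus ?thesis using block j by blast
    qed
    have Mji: "M j i = M i j" using block i j by auto
    have M1j: "M 1 j = S2" using row1 j kpos by auto
    have M1i: "M 1 i = S2" using row1 i kn ij by auto
    show ?thesis
    proof -
      consider "c = 1" | "c = i" | "c = j" | "c \<noteq> 1 \<and> c \<noteq> i \<and> c \<noteq> j" by blast
      then show ?thesis
      proof cases
        case 1 thus ?thesis using c Mi1 Mj1 M1j row1 by (simp add: plus_S_def)
      next
        case 2 thus ?thesis using c Mji M1i Dd[OF in1(1)] D[OF in1(1) in1(2) ij(1)]
          by (auto simp: plus_S_def)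
      next
        case 3 thus ?thesis using c M1j Dd[OF in1(2)] D[OF in1(1) in1(2) ij(1)]
          by (auto simp: plus_S_def)
      next
        case 4
        have "M 1 c = S2" using row1 c 4 by auto
        moreover have "M i c = S2 \<or> M i c = S3" using D[OF in1(1) c(1)] 4 by auto
        moreover have "M j c = S2 \<or> M j c = S3" using D[OF in1(2) c(1)] 4 by auto
        ultimately show ?thesis using c(2) by (auto simp: plus_S_def)
      qed
    qed
  qed
qed

end
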